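(* Let $p$ be a prime, $n\in\mathbb{N}^*$ and $\sigma$ a $p$-uniform morphism on $\mathcal A_m$. Then $$\begin{pmatrix}P_{\sigma^n(0)}(T)\\ \vdots\\ P_{\sigma^n(m-1)}(T)\end{pmatrix}=M_\sigma(T^{p^{n-1}})M_\sigma(T^{p^{n-2}})\cdots M_\sigma(T)\begin{pmatrix}0\\1\\ \vdots\\ m-1\end{pmatrix}.$$
   Context: $\mathcal A_m=\{0,\dots,m-1\}$, letters viewed in $\mathbb{F}_p$. For $W=w_0\cdots w_{r-1}$, $P_W(T)=\sum_{j=0}^{r-1}w_{r-1-j}T^j$, and $\beta_{W,j}(T)=\sum_{i:\,w_i=j}T^{r-1-i}\in\mathbb{F}_p[T]$. $M_\sigma(T)=(\beta_{\sigma(i),j}(T))_{0\le i,j\le m-1}$. A $p$-uniform morphism sends each letter to a word of length $p$. *)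

theory Defs
  imports "Berlekamp_Zassenhaus.Finite_Field" "Jordan_Normal_Form.Matrix"
begin

definition morph_word :: "(nat \<Rightarrow> nat list) \<Rightarrow> nat list \<Rightarrow> nat list" where
  "morph_word \<sigma> w = concat (map \<sigma> w)"

definition p_uniform_morphism :: "nat \<Rightarrow> nat \<Rightarrow> (nat \<Rightarrow> nat list) \<Rightarrow> bool" where
  "p_uniform_morphism p m \<sigma> \<longleftrightarrow>
     (\<forall>a<m. length (\<sigma> a) = p \<and> set (\<sigma> a) \<subseteq> {..<m})"

definition P_word :: "nat list \<Rightarrow> 'a::comm_ring_1 poly" where
  "P_word W = (\<Sum>j<length W. monom (of_nat (W ! (length W - 1 - j))) j)"

definition beta_word :: "nat list \<Rightarrow> nat \<Rightarrow> 'a::comm_ring_1 poly" where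
  "beta_word W j = (\<Sum>i\<in>{i. i < length W \<and> W ! i = j}. monom 1 (length W - 1 - i))"

definition M_sigma :: "nat \<Rightarrow> (nat \<Rightarrow> nat list) \<Rightarrow> 'a::comm_ring_1 poly mat" where
  "M_sigma m \<sigma> = mat m m (\<lambda>(i, j). beta_word (\<sigma> i) j)"

definition M_sigma_subst :: "nat \<Rightarrow> (nat \<Rightarrow> nat list) \<Rightarrow> nat \<Rightarrow> 'a::comm_ring_1 poly mat" where
  "M_sigma_subst m \<sigma> k = map_mat (\<lambda>q. q \<circ>\<^sub>p monom 1 k) (M_sigma m \<sigma>)"

end

theory Submission
  imports Defs
begin

lemma pcomp_monom: "pcompose (monom (1::'a::comm_ring_1) k) (monom 1 L) = monom 1 (k*L)"
  by (metis (no_types, opaque_lifting) Polynomial.monom_power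
    add_cancel_right_left monom_0 monom_hom.hom_zero mult.commute
    mult.right_neutral one_poly_eq_simps(2) pcompose_1
    pcompose_hom.hom_power pcompose_pCons power_one x_as_monom)

lemma morph_append: "morph_word \<sigma> (u @ v) = morph_word \<sigma> u @ morph_word \<sigma> v"
  by (simp add: morph_word_def)

lemma morphn_append: "(morph_word \<sigma> ^^ n) (u @ v) = (morph_word \<sigma> ^^ n) u @ (morph_word \<sigma> ^^ n) v"
  by (induction n) (auto simp: morph_append)

lemma morphn_cons: "(morph_word \<sigma> ^^ n) (x # v) = (morph_word \<sigma> ^^ n) [x] @ (morph_word \<sigma> ^^ n) v"
  using morphn_append[where \<sigma>=\<sigma> and n=n and u="[x]" and v=v] by simp

lemma morph_props:
  assumes "p_uniform_morphism p m \<sigma>" "set w \<subseteq> {..<m}"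
  shows "set (morph_word \<sigma> w) \<subseteq> {..<m} \<and> length (morph_word \<sigma> w) = p * length w"
  using assms(2)
proof (induction w)
  case Nil then show ?case by (simp add: morph_word_def)
next
  case (Cons a w)
  then have "a < m" by auto
  with assms(1) have "length (\<sigma> a) = p" "set (\<sigma> a) \<subseteq> {..<m}"
    by (auto simp: p_uniform_morphism_def)
  with Cons show ?case by (auto simp: morph_word_def)
qed

lemma morphn_props:
  assumes "p_uniform_morphism p m \<sigma>" "set w \<subseteq> {..<m}"
  shows "set ((morph_word \<sigma> ^^ n) w) \<subseteq> {..<m} \<and> length ((morph_word \<sigma> ^^ n) w) = p^n * length w"
proof (induction n)
  case 0 then show ?case using assms by simp
next
  case (Suc n)
  then show ?case using morph_props[OF assms(1), of "(morph_word \<sigma> ^^ n) w"] by simp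
qed

lemma P_word_nil: "P_word [] = 0" by (simp add: P_word_def)

lemma P_word_cons: "P_word (x # xs) = monom (of_nat x) (length xs) + P_word xs"
proof -
  have "P_word (x # xs) = (\<Sum>j<Suc (length xs). monom (of_nat ((x#xs) ! (length xs - j))) j)"
    by (simp add: P_word_def)
  also have "\<dots> = (\<Sum>j<length xs. monom (of_nat ((x#xs) ! (length xs - j))) j) + monom (of_nat x) (length xs)"
    by (simp add: sum.lessThan_Suc)
  also have "(\<Sum>j<length xs. monom (of_nat ((x#xs) ! (length xs - j))) j) = P_word xs"
    unfolding P_word_def
  proof (rule sum.cong)
    fix j assume "j \<in> {..<length xs}"
    then have "length xs - j = Suc (length xs - 1 - j)" by auto
    then show "monom (of_nat ((x#xs) ! (length xs - j))) j = monom (of_nat (xs ! (length xs - 1 - j))) j"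
      by simp
  qed simp
  finally show ?thesis by (simp add: add.commute)
qed

lemma P_word_append: "(P_word (u @ v) :: 'a::comm_ring_1 poly) = P_word u * monom 1 (length v) + P_word v"
proof (induction u)
  case Nil show ?case by (simp add: P_word_nil)
next
  case (Cons a u)
  have "(P_word ((a # u) @ v) :: 'a poly) = monom (of_nat a) (length u + length v) + P_word (u @ v)"
    using P_word_cons[of a "u @ v"] by simp
  also have "\<dots> = monom (of_nat a) (length u) * monom 1 (length v) + (P_word u * monom 1 (length v) + P_word v)"
    unfolding Cons.IH mult_monom by simp
  also have "\<dots> = (monom (of_nat a) (length u) + P_word u) * monom 1 (length v) + P_word v"
    by (simp only: distrib_right add.assoc)
  also have "\<dots> = P_word (a # u) * monom 1 (length v) + P_word v"
    by (simp only: P_word_cons)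
  finally show ?case .
qed

lemma beta_word_alt: "(beta_word W j :: 'a::comm_ring_1 poly) = (\<Sum>i<length W. if W ! i = j then monom 1 (length W - 1 - i) else 0)"
proof -
  have "{i. i < length W \<and> W ! i = j} = {i \<in> {..<length W}. W ! i = j}" by auto
  then show ?thesis unfolding beta_word_def by (simp only: sum.inter_filter[OF finite_lessThan])
qed

lemma beta_word_nil: "beta_word [] j = 0" by (simp add: beta_word_def)

lemma beta_word_cons: "(beta_word (x # xs) j :: 'a::comm_ring_1 poly) = (if x = j then monom 1 (length xs) else 0) + beta_word xs j"
proof -
  have "(beta_word (x # xs) j :: 'a poly) = (\<Sum>i<Suc (length xs). if (x#xs) ! i = j then monom 1 (length (x#xs) - 1 - i) else 0)"
    by (simp only: beta_word_alt length_Cons)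
  also have "\<dots> = (if x = j then monom 1 (length xs) else 0) + (\<Sum>i<length xs. if (x#xs) ! Suc i = j then monom 1 (length (x#xs) - 1 - Suc i) else 0)"
    by (simp only: sum.lessThan_Suc_shift) simp
  also have "(\<Sum>i<length xs. if (x#xs) ! Suc i = j then monom 1 (length (x#xs) - 1 - Suc i) else 0) = (beta_word xs j :: 'a poly)"
    unfolding beta_word_alt by (rule sum.cong) auto
  finally show ?thesis .
qed

lemma main_lemma:
  assumes "p_uniform_morphism p m \<sigma>" "set W \<subseteq> {..<m}"
  shows "(P_word ((morph_word \<sigma> ^^ n) W) :: 'a::comm_ring_1 poly) =
    (\<Sum>j<m. (beta_word W j \<circ>\<^sub>p monom 1 (p^n)) * P_word ((morph_word \<sigma> ^^ n) [j]))"
  using assms(2)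
proof (induction W)
  case Nil
  have "(morph_word \<sigma> ^^ n) [] = []" by (induction n) (auto simp: morph_word_def)
  then show ?case by (simp add: P_word_nil beta_word_nil)
next
  case (Cons x W)
  then have xm: "x < m" and Wm: "set W \<subseteq> {..<m}" by auto
  have len: "length ((morph_word \<sigma> ^^ n) W) = p^n * length W"
    using morphn_props[OF assms(1) Wm] by simp
  have "(P_word ((morph_word \<sigma> ^^ n) (x # W)) :: 'a poly) =
     P_word ((morph_word \<sigma> ^^ n) [x]) * monom 1 (p^n * length W) + P_word ((morph_word \<sigma> ^^ n) W)"
    by (subst morphn_cons) (simp only: P_word_append len)
  also have "P_word ((morph_word \<sigma> ^^ n) [x]) * monom 1 (p^n * length W) =
     (\<Sum>j<m. ((if x = j then monom 1 (length W) else 0) \<circ>\<^sub>p monom 1 (p^n)) * (P_word ((morph_word \<sigma> ^^ n) [j]) :: 'a poly))"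
  proof -
    have "(\<Sum>j<m. ((if x = j then monom 1 (length W) else 0) \<circ>\<^sub>p monom 1 (p^n)) * (P_word ((morph_word \<sigma> ^^ n) [j]) :: 'a poly))
       = (\<Sum>j<m. if j = x then monom 1 (length W * p^n) * P_word ((morph_word \<sigma> ^^ n) [j]) else 0)"
      by (rule sum.cong) (auto simp: pcomp_monom)
    also have "\<dots> = monom 1 (length W * p^n) * P_word ((morph_word \<sigma> ^^ n) [x])"
      using xm by (simp add: sum.delta)
    finally show ?thesis by (simp add: mult.commute)
  qed
  finally show ?case
    by (simp add: Cons.IH[OF Wm] beta_word_cons pcompose_add distrib_right sum.distrib)
qed

lemma foldr_carrier: "foldr (*) (map (\<lambda>k. M_sigma_subst m \<sigma> (p ^ k)) ks) (1\<^sub>m m) \<in> carrier_mat m m"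
  by (induction ks) (auto simp: M_sigma_subst_def M_sigma_def)

theorem corollary4p11:
  fixes \<sigma> :: "nat \<Rightarrow> nat list" and m n :: nat
  assumes "p = CARD('p::prime_card)"
    and "n \<ge> 1"
    and "p_uniform_morphism p m \<sigma>"
  shows "vec m (\<lambda>a. (P_word ((morph_word \<sigma> ^^ n) [a]) :: 'p mod_ring poly)) =
    foldr (*) (map (\<lambda>k. M_sigma_subst m \<sigma> (p ^ k)) (rev [0..<n])) (1\<^sub>m m)
      *\<^sub>v vec m (\<lambda>j. of_nat j)"
proof -
  have "foldr (*) (map (\<lambda>k. M_sigma_subst m \<sigma> (p ^ k)) (rev [0..<n])) (1\<^sub>m m)
      *\<^sub>v vec m (\<lambda>j. of_nat j) = vec m (\<lambda>a. (P_word ((morph_word \<sigma> ^^ n) [a]) :: 'p mod_ring poly))"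
  proof (induction n)
    case 0
    show ?case by (rule eq_vecI) (auto simp: P_word_cons P_word_nil monom_0 of_nat_poly)
  next
    case (Suc n)
    let ?F = "foldr (*) (map (\<lambda>k. M_sigma_subst m \<sigma> (p ^ k)) (rev [0..<n])) (1\<^sub>m m) :: 'p mod_ring poly mat"
    have F: "?F \<in> carrier_mat m m" by (rule foldr_carrier)
    have M: "(M_sigma_subst m \<sigma> (p^n) :: 'p mod_ring poly mat) \<in> carrier_mat m m"
      by (simp add: M_sigma_subst_def M_sigma_def)
    have "foldr (*) (map (\<lambda>k. M_sigma_subst m \<sigma> (p ^ k)) (rev [0..<Suc n])) (1\<^sub>m m)
      *\<^sub>v vec m (\<lambda>j. of_nat j) = M_sigma_subst m \<sigma> (p^n) *\<^sub>v (?F *\<^sub>v vec m (\<lambda>j. of_nat j))"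
      using F M by (simp add: assoc_mult_mat_vec[of _ m m _ m])
    also have "\<dots> = M_sigma_subst m \<sigma> (p^n) *\<^sub>v vec m (\<lambda>a. (P_word ((morph_word \<sigma> ^^ n) [a]) :: 'p mod_ring poly))"
      by (simp add: Suc.IH)
    also have "\<dots> = vec m (\<lambda>a. (P_word ((morph_word \<sigma> ^^ Suc n) [a]) :: 'p mod_ring poly))"
    proof (rule eq_vecI)
      fix a assume a: "a < dim_vec (vec m (\<lambda>a. (P_word ((morph_word \<sigma> ^^ Suc n) [a]) :: 'p mod_ring poly)))"
      then have am: "a < m" by simp
      have sa: "set (\<sigma> a) \<subseteq> {..<m}" using assms(3) am by (auto simp: p_uniform_morphism_def)
      have "(morph_word \<sigma> ^^ Suc n) [a] = (morph_word \<sigma> ^^ n) (\<sigma> a)"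
        by (simp add: funpow_Suc_right morph_word_def del: funpow.simps)
      then have "(P_word ((morph_word \<sigma> ^^ Suc n) [a]) :: 'p mod_ring poly) =
        (\<Sum>j<m. (beta_word (\<sigma> a) j \<circ>\<^sub>p monom 1 (p^n)) * P_word ((morph_word \<sigma> ^^ n) [j]))"
        using main_lemma[OF assms(3) sa] by simp
      moreover have "(M_sigma_subst m \<sigma> (p^n) *\<^sub>v vec m (\<lambda>a. (P_word ((morph_word \<sigma> ^^ n) [a]) :: 'p mod_ring poly))) $ a
         = (\<Sum>j<m. (beta_word (\<sigma> a) j \<circ>\<^sub>p monom 1 (p^n)) * P_word ((morph_word \<sigma> ^^ n) [j]))"
        using am by (simp add: M_sigma_subst_def M_sigma_def scalar_prod_def lessThan_atLeast0)
      ultimately show "(M_sigma_subst m \<sigma> (p^n) *\<^sub>v vec m (\<lambda>a. (P_word ((morph_word \<sigma> ^^ n) [a]) :: 'p mod_ring poly))) $ a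
         = vec m (\<lambda>a. (P_word ((morph_word \<sigma> ^^ Suc n) [a]) :: 'p mod_ring poly)) $ a"
        using am by simp
    qed (simp add: M_sigma_subst_def M_sigma_def)
    finally show ?case .
  qed
  then show ?thesis by simp
qed

end
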